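(* Let $X\subset\mathbb{R}^n$ be closed, equal to the closure of its interior, and invariant under translation by a vector $v\in\mathbb{R}^n$ (i.e. $x\in X\Rightarrow x+\lambda v\in X$ for all $\lambda\in\mathbb{R}$), and let $f:X\to\mathbb{R}^n$ be locally Lipschitz, with flow $\varphi_t$ of $\dot x=f(x)$ (solutions unique and maximally defined, defined at least for all $t\ge 0$). Then the flow satisfies $\varphi_t(\xi+\lambda v)=\varphi_t(\xi)+\lambda v$ for all $\lambda\in\mathbb{R}$, all $\xi\in X$ and all admissible $t$ if and only if: for all $x_1,x_2\in X$ with $x_1-x_2\in\operatorname{span}\{v\}$ one has $f(x_1)=f(x_2)$. *)

theory Defs
  imports "HOL-Analysis.Analysis"
begin

definition locally_lipschitz_on :: "'a::metric_space set \<Rightarrow> ('a \<Rightarrow> 'b::metric_space) \<Rightarrow> bool" where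
  "locally_lipschitz_on X f \<longleftrightarrow>
     (\<forall>x\<in>X. \<exists>e>0. \<exists>L. \<forall>y\<in>X \<inter> ball x e. \<forall>z\<in>X \<inter> ball x e. dist (f y) (f z) \<le> L * dist y z)"

definition is_solution_on ::
  "('a::real_normed_vector \<Rightarrow> 'a) \<Rightarrow> 'a set \<Rightarrow> real set \<Rightarrow> (real \<Rightarrow> 'a) \<Rightarrow> bool" where
  "is_solution_on f X I y \<longleftrightarrow> is_interval I \<and>
     (\<forall>t\<in>I. y t \<in> X \<and> (y has_vector_derivative f (y t)) (at t within I))"

definition is_max_flow ::
  "('a::real_normed_vector \<Rightarrow> 'a) \<Rightarrow> 'a set \<Rightarrow> ('a \<Rightarrow> real set) \<Rightarrow> (real \<Rightarrow> 'a \<Rightarrow> 'a) \<Rightarrow> bool" where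
  "is_max_flow f X J phi \<longleftrightarrow>
     (\<forall>\<xi>\<in>X. {0..} \<subseteq> J \<xi> \<and> phi 0 \<xi> = \<xi> \<and> is_solution_on f X (J \<xi>) (\<lambda>t. phi t \<xi>) \<and>
        (\<forall>I y. is_solution_on f X I y \<and> 0 \<in> I \<and> y 0 = \<xi> \<longrightarrow>
               I \<subseteq> J \<xi> \<and> (\<forall>t\<in>I. y t = phi t \<xi>)))"

end

theory Submission
  imports Defs
begin

theorem lemma1:
  fixes X :: "(real ^ 'n) set" and v :: "real ^ 'n" and f :: "real ^ 'n \<Rightarrow> real ^ 'n"
    and J :: "real ^ 'n \<Rightarrow> real set" and phi :: "real \<Rightarrow> real ^ 'n \<Rightarrow> real ^ 'n"
  assumes "closed X"
    and "closure (interior X) = X"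
    and "\<forall>x\<in>X. \<forall>c::real. x + c *\<^sub>R v \<in> X"
    and "locally_lipschitz_on X f"
    and "is_max_flow f X J phi"
  shows "(\<forall>\<xi>\<in>X. \<forall>c::real. \<forall>t\<in>J \<xi>. phi t (\<xi> + c *\<^sub>R v) = phi t \<xi> + c *\<^sub>R v)
     \<longleftrightarrow> (\<forall>x1\<in>X. \<forall>x2\<in>X. x1 - x2 \<in> span {v} \<longrightarrow> f x1 = f x2)"
proof
  assume H: "\<forall>\<xi>\<in>X. \<forall>c::real. \<forall>t\<in>J \<xi>. phi t (\<xi> + c *\<^sub>R v) = phi t \<xi> + c *\<^sub>R v"
  show "\<forall>x1\<in>X. \<forall>x2\<in>X. x1 - x2 \<in> span {v} \<longrightarrow> f x1 = f x2"
  proof (intro ballI impI)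
    fix x1 x2 assume x1: "x1 \<in> X" and x2: "x2 \<in> X" and sp: "x1 - x2 \<in> span {v}"
    then obtain c where c: "x1 - x2 = c *\<^sub>R v" by (auto simp: span_singleton)
    hence x1e: "x1 = x2 + c *\<^sub>R v" by (simp add: algebra_simps)
    have F1: "{0..} \<subseteq> J x1" "phi 0 x1 = x1" "is_solution_on f X (J x1) (\<lambda>t. phi t x1)"
      using assms(5) x1 unfolding is_max_flow_def by auto
    have F2: "{0..} \<subseteq> J x2" "phi 0 x2 = x2" "is_solution_on f X (J x2) (\<lambda>t. phi t x2)"
      using assms(5) x2 unfolding is_max_flow_def by auto
    have d1: "((\<lambda>t. phi t x1) has_vector_derivative f x1) (at 0 within {0..})"
      using F1 unfolding is_solution_on_def
      by (metis atLeast_iff has_vector_derivative_within_subset order_refl subsetD)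
    have d2: "((\<lambda>t. phi t x2) has_vector_derivative f x2) (at 0 within {0..})"
      using F2 unfolding is_solution_on_def
      by (metis atLeast_iff has_vector_derivative_within_subset order_refl subsetD)
    hence d2': "((\<lambda>t. phi t x2 + c *\<^sub>R v) has_vector_derivative f x2) (at 0 within {0..})"
      by (rule derivative_eq_intros) auto
    have eq: "\<And>t. t \<in> {0..} \<Longrightarrow> phi t x1 = phi t x2 + c *\<^sub>R v"
      using H x2 F2(1) x1e by auto
    have d1': "((\<lambda>t. phi t x2 + c *\<^sub>R v) has_vector_derivative f x1) (at 0 within {0..})"
      by (rule has_vector_derivative_transform[OF _ _ d1]) (use eq in auto)
    have nt: "\<not> trivial_limit (at (0::real) within {0..})"
      by (simp add: at_within_Ici_at_right)
    show "f x1 = f x2" using vector_derivative_unique_within[OF nt d1' d2'] .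
  qed
next
  assume H: "\<forall>x1\<in>X. \<forall>x2\<in>X. x1 - x2 \<in> span {v} \<longrightarrow> f x1 = f x2"
  show "\<forall>\<xi>\<in>X. \<forall>c::real. \<forall>t\<in>J \<xi>. phi t (\<xi> + c *\<^sub>R v) = phi t \<xi> + c *\<^sub>R v"
  proof (intro ballI allI)
    fix \<xi> c t assume xi: "\<xi> \<in> X" and t: "t \<in> J \<xi>"
    have F: "{0..} \<subseteq> J \<xi>" "phi 0 \<xi> = \<xi>" "is_solution_on f X (J \<xi>) (\<lambda>t. phi t \<xi>)"
      using assms(5) xi unfolding is_max_flow_def by auto
    have xi2: "\<xi> + c *\<^sub>R v \<in> X" using assms(3) xi by auto
    have sol: "is_solution_on f X (J \<xi>) (\<lambda>t. phi t \<xi> + c *\<^sub>R v)"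
      unfolding is_solution_on_def
    proof (intro conjI ballI)
      show "is_interval (J \<xi>)" using F(3) unfolding is_solution_on_def by auto
    next
      fix s assume s: "s \<in> J \<xi>"
      have m: "phi s \<xi> \<in> X" and d: "((\<lambda>t. phi t \<xi>) has_vector_derivative f (phi s \<xi>)) (at s within J \<xi>)"
        using F(3) s unfolding is_solution_on_def by auto
      show "phi s \<xi> + c *\<^sub>R v \<in> X" using assms(3) m by auto
      have sp: "(phi s \<xi> + c *\<^sub>R v) - phi s \<xi> \<in> span {v}"
        by (simp add: span_base span_scale)
      have "f (phi s \<xi> + c *\<^sub>R v) = f (phi s \<xi>)"
        using H m \<open>phi s \<xi> + c *\<^sub>R v \<in> X\<close> sp by blast
      moreover have "((\<lambda>t. phi t \<xi> + c *\<^sub>R v) has_vector_derivative f (phi s \<xi>)) (at s within J \<xi>)"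
        using d by (rule derivative_eq_intros) auto
      ultimately show "((\<lambda>t. phi t \<xi> + c *\<^sub>R v) has_vector_derivative f (phi s \<xi> + c *\<^sub>R v)) (at s within J \<xi>)"
        by simp
    qed
    have U: "\<forall>I y. is_solution_on f X I y \<and> 0 \<in> I \<and> y 0 = \<xi> + c *\<^sub>R v \<longrightarrow>
               I \<subseteq> J (\<xi> + c *\<^sub>R v) \<and> (\<forall>t\<in>I. y t = phi t (\<xi> + c *\<^sub>R v))"
      using assms(5) xi2 unfolding is_max_flow_def by blast
    have z: "0 \<in> J \<xi>" using F(1) by auto
    have "\<forall>t\<in>J \<xi>. phi t \<xi> + c *\<^sub>R v = phi t (\<xi> + c *\<^sub>R v)"
      using U[rule_format, OF conjI[OF sol conjI[OF z]]] F(2) by simp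
    then show "phi t (\<xi> + c *\<^sub>R v) = phi t \<xi> + c *\<^sub>R v"
      using t by simp
  qed
qed

end
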